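(* Let $0<p<1$, $q=0$ and $0<\theta<1$. Let \[ m_{\mathrm{COMP}}=\min_{\alpha,d}\max\left\{\frac{\theta}{1-\theta}\frac{1}{d\,D_{\mathrm{KL}}(\alpha\|0)},\ \frac{1}{1-\theta}\frac{1}{d\,D_{\mathrm{KL}}(\alpha\|e^{-d}(1-p))}\right\}k\log(n/k), \] the minimum over $d>0$ and $\alpha\in(0,e^{-d}(1-p))$, and with $w=e^{-d}p+1-e^{-d}$, \[ m_{\mathrm{DD}}=\min_{\alpha,\beta,d}\max\{c_1(\alpha,d),c_2(\alpha,d),c_3(\beta,d),c_4(\alpha,\beta,d)\}\,k\log(n/k), \] the minimum over $d>0$, $\alpha\in(0,e^{-d}(1-p))$, $\beta\in(0,e^{-d})$, where $c_1(\alpha,d)=\frac{\theta}{1-\theta}\frac{1}{d\,D_{\mathrm{KL}}(\alpha\|0)}$, $c_2(\alpha,d)=\frac{1}{d\,D_{\mathrm{KL}}(\alpha\|1-w)}$, $c_3(\beta,d)=\frac{\theta}{1-\theta}\frac{1}{d\,D_{\mathrm{KL}}(\beta\|e^{-d})}$ and \[ c_4(\alpha,\beta,d)=\max_{1-\alpha\le z\le1}\left\{\frac{1}{1-\theta}\frac{1}{d\Big(D_{\mathrm{KL}}(z\|w)+\mathbf 1\big\{\beta>\tfrac{ze^{-d}p}{w}\big\}\,z\,D_{\mathrm{KL}}\big(\tfrac\beta z\,\big\|\,\tfrac{e^{-d}p}{w}\big)\Big)}\right\}. \] Then $m_{\mathrm{COMP}}\ge m_{\mathrm{DD}}$.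
   Context: $\log$ is the natural logarithm; $D_{\mathrm{KL}}(r\|s)=r\log(r/s)+(1-r)\log\frac{1-r}{1-s}$, extended by continuity (possibly to $+\infty$) at $r$ or $s\in\{0,1\}$; $1/\infty$ is read as $0$; $\mathbf 1\{\cdot\}$ is the indicator function; $n,k$ are positive integers with $k<n$. (These quantities are the test-number bounds for noisy COMP and noisy DD with constant-column design on the reverse Z channel, i.e. false-positive probability $p$ and false-negative probability $q=0$.) *)

theory Defs
  imports "HOL-Analysis.Analysis"
begin

text \<open>One summand r log(r/s) of the binary KL divergence, extended by continuity
  to r = 0 (value 0) and to r > 0, s = 0 (value +infinity). Arguments are in [0,1].\<close>
definition kl_term :: "real \<Rightarrow> real \<Rightarrow> ereal" where
  "kl_term r s = (if r = 0 then 0 else if s = 0 then \<infinity> else ereal (r * ln (r / s)))"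

definition DKL :: "real \<Rightarrow> real \<Rightarrow> ereal" where
  "DKL r s = kl_term r s + kl_term (1 - r) (1 - s)"

text \<open>Test-number bound for noisy COMP (reverse Z channel, q = 0).
  Division is in ereal, so 1/infinity = 0 and 1/0 = infinity.\<close>
definition m_COMP :: "nat \<Rightarrow> nat \<Rightarrow> real \<Rightarrow> real \<Rightarrow> ereal" where
  "m_COMP n k p \<theta> =
     (INF (\<alpha>, d) \<in> {(\<alpha>, d). 0 < d \<and> 0 < \<alpha> \<and> \<alpha> < exp (- d) * (1 - p)}.
        max (ereal (\<theta> / (1 - \<theta>)) * (1 / (ereal d * DKL \<alpha> 0)))
            (ereal (1 / (1 - \<theta>)) * (1 / (ereal d * DKL \<alpha> (exp (- d) * (1 - p))))))
     * ereal (real k * ln (real n / real k))"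

definition w_DD :: "real \<Rightarrow> real \<Rightarrow> real" where
  "w_DD p d = exp (- d) * p + 1 - exp (- d)"

definition c1 :: "real \<Rightarrow> real \<Rightarrow> real \<Rightarrow> ereal" where
  "c1 \<theta> \<alpha> d = ereal (\<theta> / (1 - \<theta>)) * (1 / (ereal d * DKL \<alpha> 0))"

definition c2 :: "real \<Rightarrow> real \<Rightarrow> real \<Rightarrow> ereal" where
  "c2 p \<alpha> d = 1 / (ereal d * DKL \<alpha> (1 - w_DD p d))"

definition c3 :: "real \<Rightarrow> real \<Rightarrow> real \<Rightarrow> ereal" where
  "c3 \<theta> \<beta> d = ereal (\<theta> / (1 - \<theta>)) * (1 / (ereal d * DKL \<beta> (exp (- d))))"

definition c4 :: "real \<Rightarrow> real \<Rightarrow> real \<Rightarrow> real \<Rightarrow> real \<Rightarrow> ereal" where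
  "c4 p \<theta> \<alpha> \<beta> d =
     (SUP z \<in> {1 - \<alpha> .. 1}.
        ereal (1 / (1 - \<theta>)) *
        (1 / (ereal d *
              (DKL z (w_DD p d) +
               (if \<beta> > z * exp (- d) * p / w_DD p d
                then ereal z * DKL (\<beta> / z) (exp (- d) * p / w_DD p d)
                else 0)))))"

definition m_DD :: "nat \<Rightarrow> nat \<Rightarrow> real \<Rightarrow> real \<Rightarrow> ereal" where
  "m_DD n k p \<theta> =
     (INF (\<alpha>, \<beta>, d) \<in> {(\<alpha>, \<beta>, d). 0 < d \<and> 0 < \<alpha> \<and> \<alpha> < exp (- d) * (1 - p)
                                   \<and> 0 < \<beta> \<and> \<beta> < exp (- d)}.
        max (max (c1 \<theta> \<alpha> d) (c2 p \<alpha> d)) (max (c3 \<theta> \<beta> d) (c4 p \<theta> \<alpha> \<beta> d)))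
     * ereal (real k * ln (real n / real k))"

end

theory Submission
  imports Defs "HOL-Real_Asymp.Real_Asymp"
begin

definition KLr :: "real \<Rightarrow> real \<Rightarrow> real" where
  "KLr r s = r * ln (r / s) + (1 - r) * ln ((1 - r) / (1 - s))"

lemma DKL_real: "0 < r \<Longrightarrow> r < 1 \<Longrightarrow> 0 < s \<Longrightarrow> s < 1 \<Longrightarrow> DKL r s = ereal (KLr r s)"
  by (simp add: DKL_def kl_term_def KLr_def)

lemma DKL_one: "0 < s \<Longrightarrow> s < 1 \<Longrightarrow> DKL 1 s = ereal (ln (1 / s))"
  by (simp add: DKL_def kl_term_def)

lemma DKL_zero: "0 < r \<Longrightarrow> r < 1 \<Longrightarrow> DKL r 0 = \<infinity>"
  by (simp add: DKL_def kl_term_def)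

lemma ln_strict: assumes "0 < (x::real)" "x \<noteq> 1" shows "ln x < x - 1"
proof -
  define y where "y = sqrt x"
  have y: "0 < y" "y \<noteq> 1" "y * y = x" using assms by (auto simp: y_def)
  have "ln x = 2 * ln y" using assms by (simp add: y_def ln_sqrt)
  moreover have "ln y \<le> y - 1" using y by (simp add: ln_le_minus_one)
  moreover have "0 < (y - 1) * (y - 1)" using y by (cases "y > 1") (auto intro: mult_pos_pos mult_neg_neg)
  ultimately show ?thesis using y by (simp add: algebra_simps)
qed

lemma KL_pos: assumes "0 < r" "r < 1" "0 < s" "s < 1" "r \<noteq> s" shows "KLr r s > 0"
proof -
  have a: "ln (s / r) < s / r - 1" using assms by (intro ln_strict) auto
  have b: "ln ((1 - s) / (1 - r)) \<le> (1 - s) / (1 - r) - 1" using assms by (intro ln_le_minus_one) auto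
  have "r * ln (r / s) = - r * ln (s / r)" using assms by (simp add: ln_div algebra_simps)
  also have "\<dots> > - r * (s / r - 1)" using a assms by simp
  also have "- r * (s / r - 1) = r - s" using assms by (simp add: field_simps)
  finally have 1: "r * ln (r / s) > r - s" .
  have "(1 - r) * ln ((1 - r) / (1 - s)) = - (1 - r) * ln ((1 - s) / (1 - r))" using assms by (simp add: ln_div algebra_simps)
  also have "\<dots> \<ge> - (1 - r) * ((1 - s) / (1 - r) - 1)" using b assms
    by (intro mult_left_mono_neg) auto
  also have "- (1 - r) * ((1 - s) / (1 - r) - 1) = s - r" using assms by (simp add: field_simps)
  finally have 2: "(1 - r) * ln ((1 - r) / (1 - s)) \<ge> s - r" .
  show ?thesis using 1 2 by (simp add: KLr_def)
qed

lemma KL_lt_end: assumes "0 < r" "r < s" "s < 1" shows "KLr r s < - ln (1 - s)"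
proof -
  have e: "KLr r s + ln (1 - s) = r * ln (r * (1 - s) / s) + (1 - r) * ln (1 - r)"
  proof -
    have "ln (r * (1 - s) / s) = ln r + ln (1 - s) - ln s" using assms by (simp add: ln_div ln_mult)
    then show ?thesis using assms by (simp add: KLr_def ln_div algebra_simps)
  qed
  have "r * (1 - s) \<le> r * 1" using assms by (intro mult_left_mono) auto
  then have "r * (1 - s) < s" using assms by linarith
  then have "r * (1 - s) / s < 1" using assms by (simp add: divide_less_eq)
  then have "ln (r * (1 - s) / s) < 0" using assms by simp
  then have "r * ln (r * (1 - s) / s) < 0" using assms by (simp add: mult_pos_neg)
  moreover have "(1 - r) * ln (1 - r) \<le> 0" using assms by (intro mult_nonneg_nonpos) auto
  ultimately show ?thesis using e by linarith
qed

lemma KL_sym: "KLr r s = KLr (1 - r) (1 - s)"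
  by (simp add: KLr_def)

lemma KL_mono: assumes "0 < w" "w \<le> a" "a \<le> b" "b < 1" shows "KLr a w \<le> KLr b w"
proof (rule DERIV_nonneg_imp_increasing_open[OF assms(3)])
  fix x assume x: "a < x" "x < b"
  have d1': "DERIV (\<lambda>z. z * ln (z / v)) u :> ln (u / v) + 1" if u0: "0 < u" and v0: "0 < v" for u v :: real
  proof -
    have a: "DERIV (\<lambda>z. z / v) u :> 1 / v" using DERIV_cdivide[OF DERIV_ident, of v u] by simp
    have l: "DERIV (\<lambda>z. ln (z / v)) u :> inverse (u / v) * (1 / v)"
      using DERIV_chain2[OF DERIV_ln[of "u / v"] a] u0 v0 by simp
    have "DERIV (\<lambda>z. z * ln (z / v)) u :> 1 * ln (u / v) + u * (inverse (u / v) * (1 / v))"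
      using DERIV_mult[OF DERIV_ident l] u0 v0 by simp
    then show ?thesis using u0 v0 by (simp add: field_simps)
  qed
  have d1: "DERIV (\<lambda>z. z * ln (z / w)) x :> ln (x / w) + 1"
    using x assms by (intro d1') auto
  have dm: "DERIV (\<lambda>z. 1 - z) x :> -1" by (auto intro!: derivative_eq_intros)
  have d2: "DERIV (\<lambda>z. (1 - z) * ln ((1 - z) / (1 - w))) x :> (ln ((1 - x) / (1 - w)) + 1) * -1"
    using DERIV_chain2[OF d1'[of "1 - x" "1 - w"] dm] x assms by simp
  have "DERIV (\<lambda>z. KLr z w) x :> ln (x / w) - ln ((1 - x) / (1 - w))"
    unfolding KLr_def using DERIV_add[OF d1 d2] by simp
  moreover have "ln (x / w) \<ge> 0" using x assms by simp
  moreover have "ln ((1 - x) / (1 - w)) \<le> 0" using x assms by simp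
  ultimately show "\<exists>y. DERIV (\<lambda>z. KLr z w) x :> y \<and> y \<ge> 0" by (intro exI[of _ "ln (x / w) - ln ((1 - x) / (1 - w))"]) auto
next
  show "continuous_on {a..b} (\<lambda>z. KLr z w)" unfolding KLr_def using assms
    by (intro continuous_intros) auto
qed

lemma KL_limit: assumes "0 < c" "c < 1"
  shows "((\<lambda>x. KLr x c) \<longlongrightarrow> - ln (1 - c)) (at_right 0)"
proof -
  have 1: "((\<lambda>x::real. x * ln x) \<longlongrightarrow> 0) (at_right 0)" by real_asymp
  have 2: "((\<lambda>x. x * ln x - x * ln c + (1 - x) * ln ((1 - x) / (1 - c))) \<longlongrightarrow> 0 - 0 * ln c + (1 - 0) * ln ((1 - 0) / (1 - c))) (at_right 0)"
    using assms by (intro tendsto_intros 1) auto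
  have 3: "eventually (\<lambda>x. x * ln x - x * ln c + (1 - x) * ln ((1 - x) / (1 - c)) = KLr x c) (at_right 0)"
    using eventually_at_right_less[of 0] 
    by eventually_elim (use assms in \<open>simp add: KLr_def ln_div algebra_simps\<close>)
  have e: "0 - 0 * ln c + (1 - 0) * ln ((1 - 0) / (1 - c)) = - ln (1 - c)" using assms by (simp add: ln_div)
  have 4: "((\<lambda>x. x * ln x - x * ln c + (1 - x) * ln ((1 - x) / (1 - c))) \<longlongrightarrow> - ln (1 - c)) (at_right 0)"
    using 2 unfolding e .
  show ?thesis by (rule iffD1[OF tendsto_cong[OF 3] 4])
qed


lemma ereal_term: "0 < d \<Longrightarrow> 0 < G \<Longrightarrow> ereal a * (1 / (ereal d * ereal G)) = ereal (a / (d * G))"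
  by (simp add: divide_ereal_def divide_inverse)

lemma ereal_term2: "x \<noteq> 0 \<Longrightarrow> ereal a * (1 / ereal x) = ereal (a / x)"
  by (simp add: divide_ereal_def divide_inverse)

lemma ereal_term3: "x \<noteq> 0 \<Longrightarrow> 1 / ereal x = ereal (1 / x)"
  by (simp add: divide_ereal_def divide_inverse)

lemma obtain_beta:
  assumes "0 < c" "c < 1" "D < - ln (1 - c)" "0 < B"
  shows "\<exists>\<beta>. 0 < \<beta> \<and> \<beta> < c \<and> \<beta> \<le> B \<and> KLr \<beta> c > D"
proof -
  have "eventually (\<lambda>x. KLr x c > D) (at_right 0)"
    using order_tendstoD(1)[OF KL_limit[OF assms(1,2)] assms(3)] .
  moreover have "eventually (\<lambda>x. x < min c B) (at_right (0::real))"
    unfolding eventually_at_right_field using assms by (intro exI[of _ "min c B"]) auto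
  ultimately have "eventually (\<lambda>x. KLr x c > D \<and> x < min c B) (at_right (0::real))"
    by (rule eventually_conj)
  then obtain b where b: "b > 0" "\<forall>y>0. y < b \<longrightarrow> KLr y c > D \<and> y < min c B"
    unfolding eventually_at_right_field by auto
  have "b / 2 > 0" "b / 2 < b" using b by auto
  then have "KLr (b / 2) c > D \<and> b / 2 < min c B" using b by blast
  then show ?thesis using \<open>b / 2 > 0\<close> by (intro exI[of _ "b / 2"]) auto
qed

lemma m_DD_eq: "m_DD n k p \<theta> = (INF x \<in> {(\<alpha>, \<beta>, d). 0 < d \<and> 0 < \<alpha> \<and> \<alpha> < exp (- d) * (1 - p)
                                   \<and> 0 < \<beta> \<and> \<beta> < exp (- d)}. (\<lambda>(\<alpha>, \<beta>, d). max (max (c1 \<theta> \<alpha> d) (c2 p \<alpha> d)) (max (c3 \<theta> \<beta> d) (c4 p \<theta> \<alpha> \<beta> d))) x) * ereal (real k * ln (real n / real k))"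
  unfolding m_DD_def by (rule refl)
lemma m_COMP_eq: "m_COMP n k p \<theta> = (INF x \<in> {(\<alpha>, d). 0 < d \<and> 0 < \<alpha> \<and> \<alpha> < exp (- d) * (1 - p)}. (\<lambda>(\<alpha>, d). max (ereal (\<theta> / (1 - \<theta>)) * (1 / (ereal d * DKL \<alpha> 0)))
            (ereal (1 / (1 - \<theta>)) * (1 / (ereal d * DKL \<alpha> (exp (- d) * (1 - p)))))) x) * ereal (real k * ln (real n / real k))"
  unfolding m_COMP_def by (rule refl)

theorem corollary2p14:
  fixes n k :: nat and p \<theta> :: real
  assumes "0 < k" and "k < n"
    and "0 < p" and "p < 1"
    and "0 < \<theta>" and "\<theta> < 1"
  shows "m_COMP n k p \<theta> \<ge> m_DD n k p \<theta>"
proof -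
  define SC where "SC = {(\<alpha>, d). 0 < d \<and> 0 < \<alpha> \<and> \<alpha> < exp (- d) * (1 - p)}"
  define SD where "SD = {(\<alpha>, \<beta>, d). 0 < d \<and> 0 < \<alpha> \<and> \<alpha> < exp (- d) * (1 - p)
                                   \<and> 0 < \<beta> \<and> \<beta> < exp (- d)}"
  define FC where "FC = (\<lambda>(\<alpha>, d). max (ereal (\<theta> / (1 - \<theta>)) * (1 / (ereal d * DKL \<alpha> 0)))
            (ereal (1 / (1 - \<theta>)) * (1 / (ereal d * DKL \<alpha> (exp (- d) * (1 - p))))))"
  define FD where "FD = (\<lambda>(\<alpha>, \<beta>, d). max (max (c1 \<theta> \<alpha> d) (c2 p \<alpha> d)) (max (c3 \<theta> \<beta> d) (c4 p \<theta> \<alpha> \<beta> d)))"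
  define K where "K = ereal (real k * ln (real n / real k))"
  have K: "0 \<le> K" using assms unfolding K_def by simp
  have key: "(INF x \<in> SD. FD x) \<le> FC (\<alpha>, d)" if ad: "(\<alpha>, d) \<in> SC" for \<alpha> d
  proof -
    define c where "c = exp (- d)"
    define s where "s = c * (1 - p)"
    define w where "w = w_DD p d"
    have d0: "0 < d" and a0: "0 < \<alpha>" and as: "\<alpha> < s" using ad by (auto simp: SC_def s_def c_def)
    have c0: "0 < c" "c < 1" using d0 by (auto simp: c_def)
    have sc: "s \<le> c" unfolding s_def using c0 assms by (intro mult_left_le) auto
    have "0 < s" unfolding s_def using c0 assms by simp
    then have s0: "0 < s" "s \<le> c" "s < 1" using sc c0 by linarith+
    have ws: "w = 1 - s" by (simp add: w_def w_DD_def s_def c_def algebra_simps)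
    have w0: "0 < w" "w < 1" using ws s0 by auto
    define D where "D = KLr \<alpha> s"
    have Dpos: "0 < D" unfolding D_def using a0 as s0 by (intro KL_pos) auto
    have Dlt: "D < - ln (1 - s)" unfolding D_def using a0 as s0 by (intro KL_lt_end) auto
    have "- ln (1 - s) \<le> - ln (1 - c)" using s0 c0 by simp
    with Dlt have Dc: "D < - ln (1 - c)" by linarith
    define V where "V = ereal (1 / (1 - \<theta>) / (d * D))"
    have DKLa: "DKL \<alpha> s = ereal D" unfolding D_def using a0 as s0 by (intro DKL_real) auto
    have FCV: "FC (\<alpha>, d) = V"
    proof -
      have z: "1 / (ereal d * DKL \<alpha> 0) = 0"
        using a0 as s0 d0 by (simp add: DKL_zero)
      have e1: "ereal (\<theta> / (1 - \<theta>)) * (1 / (ereal d * DKL \<alpha> 0)) = 0"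
        unfolding z by simp
      have e2: "ereal (1 / (1 - \<theta>)) * (1 / (ereal d * DKL \<alpha> (exp (- d) * (1 - p)))) = V"
        using DKLa unfolding V_def s_def c_def using d0 Dpos by (simp add: ereal_term ereal_term2 ereal_term3)
      have V0: "0 \<le> V" unfolding V_def using assms d0 Dpos by simp
      show ?thesis unfolding FC_def case_prod_conv e1 e2 using V0 by (simp add: max_absorb2)
    qed
    define B where "B = (1 - \<alpha>) * c * p / w"
    have B0: "0 < B" unfolding B_def using as s0 c0 w0 assms by simp
    obtain \<beta> where b: "0 < \<beta>" "\<beta> < c" "\<beta> \<le> B" "KLr \<beta> c > D"
      using obtain_beta[OF c0 Dc B0] by blast
    have inSD: "(\<alpha>, \<beta>, d) \<in> SD" using ad b unfolding SD_def SC_def c_def by auto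
    have 1: "c1 \<theta> \<alpha> d \<le> V"
      using a0 as s0 d0 assms Dpos by (simp add: c1_def DKL_zero V_def)
    have 2: "c2 p \<alpha> d \<le> V"
    proof -
      have "c2 p \<alpha> d = ereal (1 / (d * D))"
        unfolding c2_def w_def[symmetric] ws using DKLa d0 Dpos ereal_term[of d D 1] by simp
      moreover have "1 / (d * D) \<le> 1 / (1 - \<theta>) / (d * D)"
        using assms d0 Dpos by (simp add: divide_simps)
      ultimately show ?thesis unfolding V_def by simp
    qed
    have 3: "c3 \<theta> \<beta> d \<le> V"
    proof -
      have Kb: "0 < KLr \<beta> c" using b Dpos by linarith
      have "DKL \<beta> (exp (- d)) = ereal (KLr \<beta> c)" unfolding c_def[symmetric] using b c0 by (intro DKL_real) auto
      then have "c3 \<theta> \<beta> d = ereal (\<theta> / (1 - \<theta>) / (d * KLr \<beta> c))"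
        unfolding c3_def using d0 Kb by (simp add: ereal_term ereal_term2 ereal_term3)
      moreover have "\<theta> / (1 - \<theta>) / (d * KLr \<beta> c) \<le> 1 / (1 - \<theta>) / (d * D)"
      proof -
        have "\<theta> / (1 - \<theta>) / (d * KLr \<beta> c) \<le> 1 / (1 - \<theta>) / (d * KLr \<beta> c)"
          using assms d0 Kb by (intro divide_right_mono) (auto simp: divide_simps)
        also have "\<dots> \<le> 1 / (1 - \<theta>) / (d * D)"
          using assms d0 Kb Dpos b by (intro divide_left_mono) auto
        finally show ?thesis .
      qed
      ultimately show ?thesis unfolding V_def by simp
    qed
    have 4: "c4 p \<theta> \<alpha> \<beta> d \<le> V"
      unfolding c4_def
    proof (rule SUP_least)
      fix z assume z: "z \<in> {1 - \<alpha> .. 1}"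
      have "\<beta> \<le> z * exp (- d) * p / w_DD p d"
      proof -
        have "B \<le> z * c * p / w" unfolding B_def using z c0 assms w0
          by (intro divide_right_mono mult_right_mono) auto
        then show ?thesis using b unfolding c_def w_def by simp
      qed
      then have cond: "\<not> (\<beta> > z * exp (- d) * p / w_DD p d)" by simp
      obtain G where G: "DKL z (w_DD p d) = ereal G" "D \<le> G"
      proof (cases "z = 1")
        case True
        have "DKL z (w_DD p d) = ereal (ln (1 / w))" using True w0 DKL_one unfolding w_def by simp
        moreover have "D \<le> ln (1 / w)" using Dlt ws w0 by (simp add: ln_div)
        ultimately show ?thesis using that by blast
      next
        case False
        then have z1: "z < 1" using z by simp
        have "DKL z (w_DD p d) = ereal (KLr z w)" unfolding w_def[symmetric]
          using z z1 w0 as s0 ws by (intro DKL_real) auto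
        moreover have "D \<le> KLr z w"
        proof -
          have "D = KLr (1 - \<alpha>) w" unfolding D_def using KL_sym[of "1 - \<alpha>" w] ws by simp
          also have "\<dots> \<le> KLr z w" using z z1 w0 ws as by (intro KL_mono) auto
          finally show ?thesis .
        qed
        ultimately show ?thesis using that by blast
      qed
      have Gp: "0 < G" using G Dpos by linarith
      have "ereal (1 / (1 - \<theta>)) *
        (1 / (ereal d * (DKL z (w_DD p d) +
               (if \<beta> > z * exp (- d) * p / w_DD p d
                then ereal z * DKL (\<beta> / z) (exp (- d) * p / w_DD p d)
                else 0)))) = ereal (1 / (1 - \<theta>) / (d * G))"
        using cond G d0 Gp by (simp add: ereal_term ereal_term2 ereal_term3)
      moreover have "1 / (1 - \<theta>) / (d * G) \<le> 1 / (1 - \<theta>) / (d * D)"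
        using assms d0 Dpos G by (intro divide_left_mono) auto
      ultimately show "ereal (1 / (1 - \<theta>)) *
        (1 / (ereal d * (DKL z (w_DD p d) +
               (if \<beta> > z * exp (- d) * p / w_DD p d
                then ereal z * DKL (\<beta> / z) (exp (- d) * p / w_DD p d)
                else 0)))) \<le> V" unfolding V_def by simp
    qed
    have "FD (\<alpha>, \<beta>, d) \<le> V" unfolding FD_def using 1 2 3 4 by simp
    then have "(INF x \<in> SD. FD x) \<le> V" by (intro INF_lower2[OF inSD])
    then show ?thesis using FCV by simp
  qed
  have "(INF x \<in> SD. FD x) \<le> (INF x \<in> SC. FC x)"
    by (rule INF_greatest) (use key in auto)
  then have "(INF x \<in> SD. FD x) * K \<le> (INF x \<in> SC. FC x) * K"
    using K by (rule ereal_mult_right_mono)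
  then show ?thesis unfolding m_COMP_eq m_DD_eq SC_def[symmetric] SD_def[symmetric] FC_def[symmetric] FD_def[symmetric] K_def[symmetric] .
qed

end
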